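(* Let $\mathcal{R}$ be an orthogonal TRS, $S$ a reduction strongly $p$-converging from $s$ to $t$, and $U$ a set of redex occurrences in $s$. Then $U/S$ is a set of redex occurrences in $t$.
   Context: Orthogonal = left-linear and non-overlapping. Partial terms over $\Sigma_\bot=\Sigma\uplus\{\bot\}$ ordered by $\le_\bot$ (replacing subterms by $\bot$) form a complete semilattice; $\liminf_{\iota\to\alpha}a_\iota=\bigvee_{\beta<\alpha}\bigwedge_{\beta\le\iota<\alpha}a_\iota$. A reduction $S=(t_\iota\to_{\pi_\iota}t_{\iota+1})_{\iota<\alpha}$ with contexts $c_\iota$ ($t_\iota$ with position $\pi_\iota$ replaced by $\bot$) strongly $p$-converges to $t$ if $\liminf_{\iota\to\lambda}c_\iota=t_\lambda$ for every limit $\lambda<\alpha$ and $t$ is the last term (closed) or $t=\liminf_{\iota\to\alpha}c_\iota$ (open). Descendants $U/S$ of a set $U$ of non-$\bot$ positions of $t_0$: for length 0, $U$; for a single step at $\pi$ with rule $l\to r$, each $u\in U$ yields $\{u\}$ if $\pi\not\le u$, $\emptyset$ if $u=\pi\cdot\pi'$ with $\pi'$ a function-symbol position of $l$, and $\{\pi\cdot w'\cdot x\mid r|_{w'}=l|_w\}$ if $u=\pi\cdot w\cdot x$ with $l|_w$ a variable; for successor length $\beta+1$, the descendants by the last step of the descendants by $S|_\beta$; for limit length $\alpha$, $u\in U/S$ iff $u$ is a non-$\bot$ position of $t_\alpha$ and there is $\beta<\alpha$ with $u\in U/(S|_\iota)$ for all $\beta\le\iota<\alpha$. *)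

theory Defs
  imports Main
begin

datatype ('f, 'v) lab = F 'f | V 'v | Bot

type_synonym pos = "nat list"

text \<open>A term is a partial map from positions to labels; None = not a position.\<close>
type_synonym ('f, 'v) pterm = "pos \<Rightarrow> ('f, 'v) lab option"

definition wf_term :: "('f \<Rightarrow> nat) \<Rightarrow> ('f, 'v) pterm \<Rightarrow> bool" where
  "wf_term ar t \<longleftrightarrow> t [] \<noteq> None \<and>
     (\<forall>p i. t (p @ [i]) \<noteq> None \<longleftrightarrow> (\<exists>f. t p = Some (F f) \<and> i < ar f))"

definition finite_total :: "('f \<Rightarrow> nat) \<Rightarrow> ('f, 'v) pterm \<Rightarrow> bool" where
  "finite_total ar t \<longleftrightarrow> wf_term ar t \<and> finite {p. t p \<noteq> None} \<and> (\<forall>p. t p \<noteq> Some Bot)"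

definition vars_of :: "('f, 'v) pterm \<Rightarrow> 'v set" where
  "vars_of t = {v. \<exists>p. t p = Some (V v)}"

definition subterm :: "('f, 'v) pterm \<Rightarrow> pos \<Rightarrow> ('f, 'v) pterm" where
  "subterm t p = (\<lambda>q. t (p @ q))"

definition repl :: "('f, 'v) pterm \<Rightarrow> pos \<Rightarrow> ('f, 'v) pterm \<Rightarrow> ('f, 'v) pterm" where
  "repl t p s = (\<lambda>q. if \<exists>x. q = p @ x then s (drop (length p) q) else t q)"

definition bot_term :: "('f, 'v) pterm" where
  "bot_term = (\<lambda>q. if q = [] then Some Bot else None)"

definition subst :: "('v \<Rightarrow> ('f, 'v) pterm) \<Rightarrow> ('f, 'v) pterm \<Rightarrow> ('f, 'v) pterm" where
  "subst \<sigma> r = (\<lambda>q.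
     if \<exists>w x v. q = w @ x \<and> r w = Some (V v) then
       (let w = (SOME w. \<exists>x v. q = w @ x \<and> r w = Some (V v)) in
         (case r w of Some (V v) \<Rightarrow> \<sigma> v (drop (length w) q) | _ \<Rightarrow> None))
     else r q)"

definition trs :: "('f \<Rightarrow> nat) \<Rightarrow> (('f, 'v) pterm \<times> ('f, 'v) pterm) set \<Rightarrow> bool" where
  "trs ar R \<longleftrightarrow> (\<forall>(l, r) \<in> R. finite_total ar l \<and> finite_total ar r \<and>
      (\<exists>f. l [] = Some (F f)) \<and> vars_of r \<subseteq> vars_of l)"

definition left_linear :: "(('f, 'v) pterm \<times> ('f, 'v) pterm) set \<Rightarrow> bool" where
  "left_linear R \<longleftrightarrow> (\<forall>(l, r) \<in> R. \<forall>p q v. l p = Some (V v) \<and> l q = Some (V v) \<longrightarrow> p = q)"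

definition non_overlapping :: "('f \<Rightarrow> nat) \<Rightarrow> (('f, 'v) pterm \<times> ('f, 'v) pterm) set \<Rightarrow> bool" where
  "non_overlapping ar R \<longleftrightarrow>
     (\<forall>(l1, r1) \<in> R. \<forall>(l2, r2) \<in> R. \<forall>p f. l1 p = Some (F f) \<longrightarrow>
        \<not> (p = [] \<and> (l1, r1) = (l2, r2)) \<longrightarrow>
        \<not> (\<exists>\<sigma>1 \<sigma>2. (\<forall>v. finite_total ar (\<sigma>1 v)) \<and> (\<forall>v. finite_total ar (\<sigma>2 v)) \<and>
              subst \<sigma>1 (subterm l1 p) = subst \<sigma>2 l2))"

definition orthogonal :: "('f \<Rightarrow> nat) \<Rightarrow> (('f, 'v) pterm \<times> ('f, 'v) pterm) set \<Rightarrow> bool" where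
  "orthogonal ar R \<longleftrightarrow> trs ar R \<and> left_linear R \<and> non_overlapping ar R"

definition rstep :: "('f \<Rightarrow> nat) \<Rightarrow> (('f, 'v) pterm \<times> ('f, 'v) pterm) set \<Rightarrow>
    ('f, 'v) pterm \<Rightarrow> pos \<Rightarrow> ('f, 'v) pterm \<times> ('f, 'v) pterm \<Rightarrow> ('f, 'v) pterm \<Rightarrow> bool" where
  "rstep ar R t p lr t' \<longleftrightarrow> lr \<in> R \<and>
     (\<exists>\<sigma>. (\<forall>v. wf_term ar (\<sigma> v)) \<and> subterm t p = subst \<sigma> (fst lr) \<and>
          t' = repl t p (subst \<sigma> (snd lr)))"

definition redex_occ :: "('f \<Rightarrow> nat) \<Rightarrow> (('f, 'v) pterm \<times> ('f, 'v) pterm) set \<Rightarrow>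
    ('f, 'v) pterm \<Rightarrow> pos \<Rightarrow> bool" where
  "redex_occ ar R t u \<longleftrightarrow>
     (\<exists>(l, r) \<in> R. \<exists>\<sigma>. (\<forall>v. wf_term ar (\<sigma> v)) \<and> subterm t u = subst \<sigma> l)"

definition le_bot :: "('f, 'v) pterm \<Rightarrow> ('f, 'v) pterm \<Rightarrow> bool" where
  "le_bot s t \<longleftrightarrow> (\<forall>p. s p \<noteq> None \<longrightarrow> t p \<noteq> None \<and> (s p = Some Bot \<or> s p = t p))"

definition is_glb :: "('f \<Rightarrow> nat) \<Rightarrow> ('f, 'v) pterm set \<Rightarrow> ('f, 'v) pterm \<Rightarrow> bool" where
  "is_glb ar A g \<longleftrightarrow> wf_term ar g \<and> (\<forall>a \<in> A. le_bot g a) \<and>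
     (\<forall>h. wf_term ar h \<and> (\<forall>a \<in> A. le_bot h a) \<longrightarrow> le_bot h g)"

definition is_lub :: "('f \<Rightarrow> nat) \<Rightarrow> ('f, 'v) pterm set \<Rightarrow> ('f, 'v) pterm \<Rightarrow> bool" where
  "is_lub ar A g \<longleftrightarrow> wf_term ar g \<and> (\<forall>a \<in> A. le_bot a g) \<and>
     (\<forall>h. wf_term ar h \<and> (\<forall>a \<in> A. le_bot a h) \<longrightarrow> le_bot g h)"

definition is_liminf :: "('f \<Rightarrow> nat) \<Rightarrow> ('o::wellorder \<Rightarrow> ('f, 'v) pterm) \<Rightarrow> 'o \<Rightarrow> ('f, 'v) pterm \<Rightarrow> bool" where
  "is_liminf ar a lam x \<longleftrightarrow>
     is_lub ar {g. \<exists>b < lam. is_glb ar {a i | i. b \<le> i \<and> i < lam} g} x"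

definition ord0 :: "'o::wellorder" where
  "ord0 = (LEAST x. True)"

definition osucc :: "'o::wellorder \<Rightarrow> 'o" where
  "osucc i = (LEAST k. i < k)"

definition is_limit :: "'o::wellorder \<Rightarrow> bool" where
  "is_limit lam \<longleftrightarrow> (\<exists>i. i < lam) \<and> (\<forall>i < lam. \<exists>k. i < k \<and> k < lam)"

definition ctx :: "('o \<Rightarrow> ('f, 'v) pterm) \<Rightarrow> ('o \<Rightarrow> pos) \<Rightarrow> 'o \<Rightarrow> ('f, 'v) pterm" where
  "ctx ts ps i = repl (ts i) (ps i) bot_term"

text \<open>A reduction of length alpha: terms ts i (i <= alpha), redex positions ps i and
  rules rs i (i < alpha). For an open reduction (alpha a limit) ts alpha denotes the limit.\<close>
definition strongly_p_converges ::
  "('f \<Rightarrow> nat) \<Rightarrow> (('f, 'v) pterm \<times> ('f, 'v) pterm) set \<Rightarrow> 'o::wellorder \<Rightarrow>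
   ('o \<Rightarrow> ('f, 'v) pterm) \<Rightarrow> ('o \<Rightarrow> pos) \<Rightarrow> ('o \<Rightarrow> ('f, 'v) pterm \<times> ('f, 'v) pterm) \<Rightarrow>
   ('f, 'v) pterm \<Rightarrow> bool" where
  "strongly_p_converges ar R alpha ts ps rs t \<longleftrightarrow>
     (\<forall>i \<le> alpha. wf_term ar (ts i)) \<and>
     (\<forall>i < alpha. rstep ar R (ts i) (ps i) (rs i) (ts (osucc i))) \<and>
     (\<forall>lam < alpha. is_limit lam \<longrightarrow> is_liminf ar (ctx ts ps) lam (ts lam)) \<and>
     t = ts alpha \<and>
     (is_limit alpha \<longrightarrow> is_liminf ar (ctx ts ps) alpha t)"

definition desc1 :: "('f, 'v) pterm \<times> ('f, 'v) pterm \<Rightarrow> pos \<Rightarrow> pos \<Rightarrow> pos set" where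
  "desc1 lr p u =
     (if \<not> (\<exists>x. u = p @ x) then {u}
      else if \<exists>p' f. u = p @ p' \<and> fst lr p' = Some (F f) then {}
      else {p @ w' @ x | w w' x v. u = p @ w @ x \<and> fst lr w = Some (V v) \<and> snd lr w' = Some (V v)})"

definition desc_step :: "('f, 'v) pterm \<times> ('f, 'v) pterm \<Rightarrow> pos \<Rightarrow> pos set \<Rightarrow> pos set" where
  "desc_step lr p U = (\<Union>u \<in> U. desc1 lr p u)"

text \<open>D b = U/(S|_b) for all b <= alpha, defined by transfinite recursion (this
  characterises D uniquely on [0, alpha]).\<close>
definition descendant_family ::
  "'o::wellorder \<Rightarrow> ('o \<Rightarrow> ('f, 'v) pterm) \<Rightarrow> ('o \<Rightarrow> pos) \<Rightarrow>
   ('o \<Rightarrow> ('f, 'v) pterm \<times> ('f, 'v) pterm) \<Rightarrow> pos set \<Rightarrow> ('o \<Rightarrow> pos set) \<Rightarrow> bool" where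
  "descendant_family alpha ts ps rs U D \<longleftrightarrow>
     (\<forall>b \<le> alpha. \<not> (\<exists>i. i < b) \<longrightarrow> D b = U) \<and>
     (\<forall>i < alpha. D (osucc i) = desc_step (rs i) (ps i) (D i)) \<and>
     (\<forall>b \<le> alpha. is_limit b \<longrightarrow>
        D b = {u. ts b u \<noteq> None \<and> ts b u \<noteq> Some Bot \<and>
                  (\<exists>c < b. \<forall>i. c \<le> i \<and> i < b \<longrightarrow> u \<in> D i)})"

end

theory Submission
  imports Defs
begin


definition vt :: "'v \<Rightarrow> ('f,'v) pterm" where
 "vt v = (\<lambda>q. if q = [] then Some (V v) else None)"

definition matches :: "('f,'v) pterm \<Rightarrow> pos \<Rightarrow> ('f,'v) pterm \<Rightarrow> bool" where
 "matches T u l \<longleftrightarrow> (\<forall>\<pi> f. l \<pi> = Some (F f) \<longrightarrow> T (u @ \<pi>) = Some (F f))"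

definition lin :: "('f,'v) pterm \<Rightarrow> bool" where
 "lin l \<longleftrightarrow> (\<forall>p q v. l p = Some (V v) \<and> l q = Some (V v) \<longrightarrow> p = q)"

lemma wf_child: "wf_term ar t \<Longrightarrow> t (p @ [i]) \<noteq> None \<longleftrightarrow> (\<exists>f. t p = Some (F f) \<and> i < ar f)"
  unfolding wf_term_def by blast

lemma wf_root: "wf_term ar t \<Longrightarrow> t [] \<noteq> None"
  unfolding wf_term_def by blast

lemma wf_prefix:
  assumes "wf_term ar t" "t (p @ q) \<noteq> None"
  shows "t p \<noteq> None \<and> (q \<noteq> [] \<longrightarrow> (\<exists>f. t p = Some (F f)))"
  using assms(2)
proof (induction q rule: rev_induct)
  case Nil then show ?case by simp
next
  case (snoc i q)
  have "t ((p @ q) @ [i]) \<noteq> None" using snoc.prems by simp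
  then obtain f where f: "t (p @ q) = Some (F f)" "i < ar f" using wf_child[OF assms(1)] by blast
  then have "t p \<noteq> None \<and> (q \<noteq> [] \<longrightarrow> (\<exists>f. t p = Some (F f)))" using snoc.IH by simp
  then show ?case using f by (cases "q = []") auto
qed

lemma var_prefix_unique:
  assumes "wf_term ar l" "l w1 = Some (V v1)" "l w2 = Some (V v2)" "w1 @ x1 = w2 @ x2"
  shows "w1 = w2"
proof -
  have c: "False" if "wa @ z = wb" "z \<noteq> []" "l wa = Some (V va)" "l wb = Some (V vb)" for wa wb z va vb
    using wf_prefix[OF assms(1), of wa z] that by auto
  from assms(4) obtain z where "w1 = w2 @ z \<and> z @ x1 = x2 \<or> w1 @ z = w2 \<and> x1 = z @ x2"
    by (auto simp: append_eq_append_conv2)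
  then show ?thesis using c assms(2,3) by (metis append.right_neutral)
qed

lemma subst_var:
  assumes "wf_term ar l" "l w = Some (V v)"
  shows "subst \<sigma> l (w @ x) = \<sigma> v x"
proof -
  have ex: "\<exists>w0 x0 v0. w @ x = w0 @ x0 \<and> l w0 = Some (V v0)" using assms(2) by blast
  define ww where "ww = (SOME w0. \<exists>x0 v0. w @ x = w0 @ x0 \<and> l w0 = Some (V v0))"
  have "\<exists>x0 v0. w @ x = ww @ x0 \<and> l ww = Some (V v0)" unfolding ww_def
    by (rule someI_ex) (use assms(2) in blast)
  then obtain x0 v0 where h: "w @ x = ww @ x0" "l ww = Some (V v0)" by blast
  have e: "ww = w" using var_prefix_unique[OF assms(1) h(2) assms(2)] h(1) by metis
  show ?thesis unfolding subst_def Let_def ww_def[symmetric] using ex assms(2) e by simp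
qed

lemma subst_nonvar:
  assumes "\<not> (\<exists>w x v. q = w @ x \<and> l w = Some (V v))"
  shows "subst \<sigma> l q = l q"
  unfolding subst_def by (rule if_not_P[OF assms])

lemma subst_fn:
  assumes "wf_term ar l" "l \<pi> = Some (F f)"
  shows "subst \<sigma> l \<pi> = Some (F f)"
proof -
  have "\<not> (\<exists>w x v. \<pi> = w @ x \<and> l w = Some (V v))"
  proof
    assume "\<exists>w x v. \<pi> = w @ x \<and> l w = Some (V v)"
    then obtain w x v where h: "\<pi> = w @ x" "l w = Some (V v)" by blast
    show False using wf_prefix[OF assms(1), of w x] h assms(2) by (cases "x = []") auto
  qed
  then show ?thesis using subst_nonvar assms(2) by metis
qed

lemma subst_matches:
  assumes "wf_term ar l" "subterm T u = subst \<sigma> l"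
  shows "matches T u l"
  unfolding matches_def
proof (intro allI impI)
  fix \<pi> f assume "l \<pi> = Some (F f)"
  then have "subst \<sigma> l \<pi> = Some (F f)" by (rule subst_fn[OF assms(1)])
  then show "T (u @ \<pi>) = Some (F f)" using fun_cong[OF assms(2), of \<pi>] by (simp add: subterm_def)
qed

lemma wf_subterm: 
  assumes "wf_term ar T" "T p \<noteq> None" shows "wf_term ar (subterm T p)"
  unfolding wf_term_def subterm_def
proof (intro conjI allI)
  show "T (p @ []) \<noteq> None" using assms by simp
  fix q i show "(T (p @ q @ [i]) \<noteq> None) = (\<exists>f. T (p @ q) = Some (F f) \<and> i < ar f)"
    using wf_child[OF assms(1), of "p @ q" i] by simp
qed

lemma wf_vt: "wf_term ar (vt v)" unfolding wf_term_def vt_def by auto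

lemma ft_vt: "finite_total ar (vt v :: ('f,'v) pterm)"
proof -
  have "{q. (vt v :: ('f,'v) pterm) q \<noteq> None} = {[]}" by (auto simp: vt_def)
  then have "finite {q. (vt v :: ('f,'v) pterm) q \<noteq> None}" by (metis finite.emptyI finite_insert)
  moreover have "(vt v :: ('f,'v) pterm) p \<noteq> Some Bot" for p by (simp add: vt_def)
  ultimately show ?thesis unfolding finite_total_def by (simp add: wf_vt)
qed

lemma ft_subterm:
  assumes "finite_total ar T" "T p \<noteq> None" shows "finite_total ar (subterm T p)"
proof -
  have "{q. subterm T p q \<noteq> None} = (\<lambda>q. p @ q) -` {q. T q \<noteq> None}" by (auto simp: subterm_def)
  moreover have "finite ((\<lambda>q. p @ q) -` {q. T q \<noteq> None})"
    using assms(1) by (intro finite_vimageI) (auto simp: finite_total_def inj_on_def)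
  ultimately show ?thesis using assms wf_subterm unfolding finite_total_def by (auto simp: subterm_def)
qed

definition msub :: "('f,'v) pterm \<Rightarrow> ('f,'v) pterm \<Rightarrow> 'v \<Rightarrow> ('f,'v) pterm" where
  "msub T l v = (if \<exists>w. l w = Some (V v) then subterm T (SOME w. l w = Some (V v)) else vt v)"

lemma match_pos:
  assumes "wf_term ar T" "wf_term ar l" "matches T [] l" "l w \<noteq> None"
  shows "T w \<noteq> None"
proof (cases w rule: rev_cases)
  case Nil then show ?thesis using wf_root[OF assms(1)] by simp
next
  case (snoc w0 i)
  then obtain f where "l w0 = Some (F f)" "i < ar f" using wf_child[OF assms(2)] assms(4) by blast
  then show ?thesis using assms(3) wf_child[OF assms(1)] snoc unfolding matches_def by force
qed

lemma msub_wf: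
  assumes "wf_term ar T" "wf_term ar l" "matches T [] l"
  shows "wf_term ar (msub T l v)"
proof (cases "\<exists>w. l w = Some (V v)")
  case True
  then have "l (SOME w. l w = Some (V v)) = Some (V v)" by (rule someI_ex)
  then show ?thesis using True wf_subterm[OF assms(1)] match_pos[OF assms] unfolding msub_def by auto
qed (auto simp: msub_def wf_vt)

lemma msub_ft:
  assumes "finite_total ar T" "wf_term ar l" "matches T [] l"
  shows "finite_total ar (msub T l v)"
proof (cases "\<exists>w. l w = Some (V v)")
  case True
  then have "l (SOME w. l w = Some (V v)) = Some (V v)" by (rule someI_ex)
  moreover have "wf_term ar T" using assms(1) by (simp add: finite_total_def)
  ultimately show ?thesis using True ft_subterm[OF assms(1)] match_pos[OF _ assms(2,3)] unfolding msub_def by auto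
qed (auto simp: msub_def ft_vt)

lemma match_subst:
  assumes wfT: "wf_term ar T" and wfl: "wf_term ar l" and nb: "\<forall>p. l p \<noteq> Some Bot"
    and ln: "lin l" and m: "matches T [] l"
  shows "T = subst (msub T l) l"
proof
  fix q
  show "T q = subst (msub T l) l q"
  proof (cases "\<exists>w x v. q = w @ x \<and> l w = Some (V v)")
    case True
    then obtain w x v where h: "q = w @ x" "l w = Some (V v)" by blast
    have "(SOME w. l w = Some (V v)) = w"
      by (rule some_equality) (use h(2) ln in \<open>auto simp: lin_def\<close>)
    then have "msub T l v = subterm T w" using h(2) unfolding msub_def by auto
    then show ?thesis using subst_var[OF wfl h(2)] h(1) by (simp add: subterm_def)
  next
    case False
    have "T q = l q" using False
    proof (induction q rule: rev_induct)
      case Nil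
      then have nv: "l [] \<noteq> Some (V v)" for v by force
      have "l [] \<noteq> None" using wf_root[OF wfl] .
      then obtain a where a: "l [] = Some a" by blast
      then obtain f where "a = F f" using nv nb by (cases a) auto
      then show ?case using m a unfolding matches_def by force
    next
      case (snoc i q0)
      have nv0: "\<not> (\<exists>w x v. q0 = w @ x \<and> l w = Some (V v))"
        using snoc.prems by (metis append.assoc)
      have IH: "T q0 = l q0" using snoc.IH nv0 by blast
      have nvq: "l (q0 @ [i]) \<noteq> Some (V v)" for v using snoc.prems by (metis append_Nil2)
      show ?case
      proof (cases "l (q0 @ [i])")
        case None
        have "T (q0 @ [i]) = None"
        proof (rule ccontr)
          assume "T (q0 @ [i]) \<noteq> None"
          then obtain f where "T q0 = Some (F f)" "i < ar f" using wf_child[OF wfT] by blast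
          then have "l (q0 @ [i]) \<noteq> None" using IH wf_child[OF wfl] by auto
          then show False using None by simp
        qed
        then show ?thesis using None by simp
      next
        case (Some a)
        then obtain f where "a = F f" using nvq nb by (cases a) auto
        then show ?thesis using m Some unfolding matches_def by force
      qed
    qed
    then show ?thesis using subst_nonvar[OF False] by simp
  qed
qed



lemma ft_common:
  fixes T :: "('f,'v) pterm"
  assumes wfT: "wf_term ar T" and fA: "finite_total ar A" and fB: "finite_total ar B"
    and rA: "A [] = Some (F f0)" and mA: "matches T [] A" and mB: "matches T [] B"
  shows "\<exists>T'. finite_total ar T' \<and> matches T' [] A \<and> matches T' [] B"
proof -
  obtain x0 :: 'v where True by blast
  define fp where "fp q \<longleftrightarrow> (\<exists>f. A q = Some (F f)) \<or> (\<exists>f. B q = Some (F f))" for q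
  define T' where "T' q = (if fp q then T q else if q \<noteq> [] \<and> fp (butlast q) \<and> T q \<noteq> None then Some (V x0) else None)" for q
  have wfA: "wf_term ar A" and wfB: "wf_term ar B" using fA fB by (auto simp: finite_total_def)
  have fpT: "\<exists>f. T q = Some (F f)" if "fp q" for q using that mA mB unfolding fp_def matches_def by force
  have fp_pre: "fp q" if "fp (q @ [i])" for q i
    using that wf_prefix[OF wfA, of q "[i]"] wf_prefix[OF wfB, of q "[i]"] unfolding fp_def by force
  have wf: "wf_term ar T'"
    unfolding wf_term_def
  proof (intro conjI allI)
    have "fp []" using rA fp_def by blast
    then show "T' [] \<noteq> None" using fpT T'_def by force
    fix q i
    show "(T' (q @ [i]) \<noteq> None) = (\<exists>f. T' q = Some (F f) \<and> i < ar f)"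
    proof
      assume h: "T' (q @ [i]) \<noteq> None"
      have "fp q \<and> T (q @ [i]) \<noteq> None"
      proof (cases "fp (q @ [i])")
        case True then show ?thesis using fp_pre fpT by blast
      next
        case False then show ?thesis using h unfolding T'_def by (auto split: if_splits)
      qed
      then show "\<exists>f. T' q = Some (F f) \<and> i < ar f" using wf_child[OF wfT] T'_def by auto
    next
      assume "\<exists>f. T' q = Some (F f) \<and> i < ar f"
      then obtain f where f: "T' q = Some (F f)" "i < ar f" by blast
      then have "fp q" unfolding T'_def by (auto split: if_splits)
      then have "T q = Some (F f)" using f T'_def by simp
      then have "T (q @ [i]) \<noteq> None" using wf_child[OF wfT] f by blast
      then show "T' (q @ [i]) \<noteq> None" using \<open>fp q\<close> unfolding T'_def by auto
    qed
  qed
  have nb: "T' q \<noteq> Some Bot" for q using fpT[of q] unfolding T'_def by (auto split: if_splits)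
  have sub: "A q \<noteq> None \<or> B q \<noteq> None" if "T' q \<noteq> None" for q
  proof (cases "fp q")
    case True then show ?thesis unfolding fp_def by auto
  next
    case False
    then have h: "q \<noteq> []" "fp (butlast q)" "T q \<noteq> None" using that unfolding T'_def by (auto split: if_splits)
    have qe: "q = butlast q @ [last q]" using h(1) by simp
    then obtain g where g: "T (butlast q) = Some (F g)" "last q < ar g" using h(3) wf_child[OF wfT] by metis
    show ?thesis
    proof (cases "\<exists>f. A (butlast q) = Some (F f)")
      case True
      then obtain f where af: "A (butlast q) = Some (F f)" by blast
      then have "T (butlast q) = Some (F f)" using mA unfolding matches_def by force
      then have "A (butlast q @ [last q]) \<noteq> None" using af g wf_child[OF wfA] by auto
      then show ?thesis using qe by metis
    next
      case False
      then obtain f where bf: "B (butlast q) = Some (F f)" using h(2) fp_def by blast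
      then have "T (butlast q) = Some (F f)" using mB unfolding matches_def by force
      then have "B (butlast q @ [last q]) \<noteq> None" using bf g wf_child[OF wfB] by auto
      then show ?thesis using qe by metis
    qed
  qed
  have "{q. T' q \<noteq> None} \<subseteq> {q. A q \<noteq> None} \<union> {q. B q \<noteq> None}" using sub by blast
  moreover have "finite ({q. A q \<noteq> None} \<union> {q. B q \<noteq> None})" using fA fB by (simp add: finite_total_def)
  ultimately have fin: "finite {q. T' q \<noteq> None}" by (rule finite_subset)
  have "matches T' [] A" unfolding matches_def
  proof (intro allI impI)
    fix \<pi> f assume "A \<pi> = Some (F f)"
    then have "fp \<pi>" "T \<pi> = Some (F f)" using mA unfolding fp_def matches_def by auto
    then show "T' ([] @ \<pi>) = Some (F f)" unfolding T'_def by simp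
  qed
  moreover have "matches T' [] B" unfolding matches_def
  proof (intro allI impI)
    fix \<pi> f assume "B \<pi> = Some (F f)"
    then have "fp \<pi>" "T \<pi> = Some (F f)" using mB unfolding fp_def matches_def by auto
    then show "T' ([] @ \<pi>) = Some (F f)" unfolding T'_def by simp
  qed
  moreover have "finite_total ar T'" unfolding finite_total_def using wf nb fin by blast
  ultimately show ?thesis by blast
qed

lemma lin_rule: "left_linear R \<Longrightarrow> (l, r) \<in> R \<Longrightarrow> lin l"
  unfolding left_linear_def lin_def by fastforce

lemma rule_ft:
  assumes "orthogonal ar R" "(l, r) \<in> R"
  shows "finite_total ar l" "finite_total ar r" "\<exists>f. l [] = Some (F f)" "lin l"
proof -
  have t: "trs ar R" and ll: "left_linear R" using assms(1) unfolding orthogonal_def by auto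
  have "finite_total ar l \<and> finite_total ar r \<and> (\<exists>f. l [] = Some (F f)) \<and> vars_of r \<subseteq> vars_of l"
    using bspec[OF t[unfolded trs_def] assms(2)] by (simp only: prod.case)
  then show "finite_total ar l" "finite_total ar r" "\<exists>f. l [] = Some (F f)" by auto
  show "lin l" using lin_rule[OF ll assms(2)] .
qed

lemma match_subst_ft:
  assumes "finite_total ar T" "finite_total ar l" "lin l" "matches T [] l"
  shows "T = subst (msub T l) l \<and> (\<forall>v. finite_total ar (msub T l v))"
proof -
  have w: "wf_term ar T" "wf_term ar l" "\<forall>p. l p \<noteq> Some Bot" using assms(1,2) unfolding finite_total_def by auto
  show ?thesis using match_subst[OF w assms(3,4)] msub_ft[OF assms(1) w(2) assms(4)] by blast
qed

lemma no_overlap: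
  assumes orth: "orthogonal ar R" and wfT: "wf_term ar T"
    and r1: "(l1, r1) \<in> R" and r2: "(l2, r2) \<in> R"
    and m1: "matches T u l1" and m2: "matches T (u @ y) l2"
    and y: "y \<noteq> []" and fy: "l1 y = Some (F f)"
  shows False
proof -
  have ftl1: "finite_total ar l1" and ftl2: "finite_total ar l2" using rule_ft[OF orth r1] rule_ft[OF orth r2] by auto
  define T0 where "T0 = subterm T (u @ y)"
  have "T (u @ y) = Some (F f)" using m1 fy unfolding matches_def by blast
  then have wf0: "wf_term ar T0" unfolding T0_def using wf_subterm[OF wfT] by simp
  define A where "A = subterm l1 y"
  have ftA: "finite_total ar A" unfolding A_def using ft_subterm[OF ftl1] fy by simp
  have linA: "lin A" unfolding lin_def
  proof (intro allI impI)
    fix p q v assume "A p = Some (V v) \<and> A q = Some (V v)"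
    then have "l1 (y @ p) = Some (V v)" "l1 (y @ q) = Some (V v)" unfolding A_def subterm_def by auto
    then have "y @ p = y @ q" using rule_ft(4)[OF orth r1] unfolding lin_def by blast
    then show "p = q" by simp
  qed
  have lin2: "lin l2" using rule_ft(4)[OF orth r2] .
  have rA: "A [] = Some (F f)" using fy unfolding A_def subterm_def by simp
  have mA: "matches T0 [] A" using m1 unfolding matches_def T0_def A_def subterm_def by simp
  have mB: "matches T0 [] l2" using m2 unfolding matches_def T0_def subterm_def by simp
  obtain T' where T': "finite_total ar T'" "matches T' [] A" "matches T' [] l2"
    using ft_common[OF wf0 ftA ftl2 rA mA mB] by blast
  have e1: "T' = subst (msub T' A) A" and f1: "\<forall>v. finite_total ar (msub T' A v)"
    using match_subst_ft[OF T'(1) ftA linA T'(2)] by auto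
  have e2: "T' = subst (msub T' l2) l2" and f2: "\<forall>v. finite_total ar (msub T' l2 v)"
    using match_subst_ft[OF T'(1) ftl2 lin2 T'(3)] by auto
  have no: "non_overlapping ar R" using orth unfolding orthogonal_def by simp
  have n1: "\<forall>(l2, r2) \<in> R. \<forall>p f. l1 p = Some (F f) \<longrightarrow> \<not> (p = [] \<and> (l1, r1) = (l2, r2)) \<longrightarrow> \<not> (\<exists>\<sigma>1 \<sigma>2. (\<forall>v. finite_total ar (\<sigma>1 v)) \<and> (\<forall>v. finite_total ar (\<sigma>2 v)) \<and> subst \<sigma>1 (subterm l1 p) = subst \<sigma>2 l2)"
    using bspec[OF no[unfolded non_overlapping_def] r1] by (simp only: prod.case)
  have n2: "\<forall>p f. l1 p = Some (F f) \<longrightarrow> \<not> (p = [] \<and> (l1, r1) = (l2, r2)) \<longrightarrow> \<not> (\<exists>\<sigma>1 \<sigma>2. (\<forall>v. finite_total ar (\<sigma>1 v)) \<and> (\<forall>v. finite_total ar (\<sigma>2 v)) \<and> subst \<sigma>1 (subterm l1 p) = subst \<sigma>2 l2)"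
    using bspec[OF n1 r2] by (simp only: prod.case)
  have n3: "\<not> (\<exists>\<sigma>1 \<sigma>2. (\<forall>v. finite_total ar (\<sigma>1 v)) \<and> (\<forall>v. finite_total ar (\<sigma>2 v)) \<and> subst \<sigma>1 (subterm l1 y) = subst \<sigma>2 l2)"
    using n2 fy y by blast
  have "subst (msub T' A) (subterm l1 y) = subst (msub T' l2) l2" using e1 e2 unfolding A_def by metis
  then show False using n3 f1 f2 by blast
qed

lemma not_below_fn:
  assumes orth: "orthogonal ar R" and wfT: "wf_term ar T"
    and r1: "(l1, r1) \<in> R" and r2: "(l2, r2) \<in> R"
    and m1: "matches T u l1" and m2: "matches T p l2"
    and np: "\<not> (\<exists>z. u = p @ z)" and fp: "l1 \<pi> = Some (F f)"
  shows "\<not> (\<exists>x. u @ \<pi> = p @ x)"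
proof
  assume "\<exists>x. u @ \<pi> = p @ x"
  then obtain x where e: "u @ \<pi> = p @ x" by blast
  then obtain y where y: "p = u @ y" "\<pi> = y @ x" using np by (auto simp: append_eq_append_conv2)
  have yne: "y \<noteq> []" using y np by auto
  have wfl: "wf_term ar l1" using rule_ft(1)[OF orth r1] by (simp add: finite_total_def)
  have "\<exists>g. l1 y = Some (F g)"
  proof (cases "x = []")
    case True then show ?thesis using y fp by simp
  next
    case False then show ?thesis using wf_prefix[OF wfl, of y x] y fp by auto
  qed
  then obtain g where "l1 y = Some (F g)" by blast
  then show False using no_overlap[OF orth wfT r1 r2 m1 _ yne] m2 y by blast
qed



lemma le_bot_trans: "le_bot a b \<Longrightarrow> le_bot b c \<Longrightarrow> le_bot a c"
  unfolding le_bot_def by metis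

definition trunc :: "('f,'v) pterm \<Rightarrow> pos \<Rightarrow> ('f,'v) pterm" where
  "trunc x q = (\<lambda>p. if \<exists>z. p = q @ z then (if p = q then Some Bot else None) else x p)"

lemma ctx_trunc: "ctx ts ps i = trunc (ts i) (ps i)"
  unfolding ctx_def repl_def trunc_def bot_term_def by (auto intro!: ext)

lemma wf_trunc:
  assumes wf: "wf_term ar x" and xq: "x q \<noteq> None"
  shows "wf_term ar (trunc x q)"
  unfolding wf_term_def
proof (intro conjI allI)
  show "trunc x q [] \<noteq> None" using wf_root[OF wf] unfolding trunc_def by auto
  fix p i
  show "(trunc x q (p @ [i]) \<noteq> None) = (\<exists>f. trunc x q p = Some (F f) \<and> i < ar f)"
  proof (cases "\<exists>z. p @ [i] = q @ z")
    case True
    then obtain z where z: "p @ [i] = q @ z" by blast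
    show ?thesis
    proof (cases "z = []")
      case True
      then have pq: "p @ [i] = q" using z by simp
      then have np: "\<not> (\<exists>z. p = q @ z)" by (metis append_eq_append_conv2 butlast_append butlast_snoc
            append_self_conv2 length_append length_append_singleton not_less_eq_eq le_add1 Suc_n_not_le_n)
      have "\<exists>f. x p = Some (F f) \<and> i < ar f" using xq pq wf_child[OF wf] by blast
      then show ?thesis using np pq unfolding trunc_def by auto
    next
      case False
      then have "p = q @ butlast z" using z by (metis append_butlast_last_id append_assoc butlast_append butlast_snoc)
      then show ?thesis using z unfolding trunc_def by auto
    qed
  next
    case False
    then have np: "\<not> (\<exists>z. p = q @ z)" by auto
    show ?thesis using False np wf_child[OF wf] unfolding trunc_def by auto
  qed
qed

lemma glb_exists:
  fixes A :: "('f,'v) pterm set"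
  assumes a0: "a0 \<in> A" and wfA: "\<forall>a\<in>A. wf_term ar a"
  shows "\<exists>g. is_glb ar A g"
proof -
  define agree where "agree q \<longleftrightarrow> (\<forall>a\<in>A. a q = a0 q)" for q
  define sp where "sp q \<longleftrightarrow> (\<forall>q' z. q = q' @ z \<and> z \<noteq> [] \<longrightarrow> agree q')" for q
  define g where "g q = (if a0 q \<noteq> None \<and> sp q then (if agree q then a0 q else Some Bot) else None)" for q
  have wf0: "wf_term ar a0" using a0 wfA by blast
  have sp_snoc: "sp (q @ [i]) \<longleftrightarrow> sp q \<and> agree q" for q i
  proof
    assume h: "sp (q @ [i])"
    have "agree q" using h unfolding sp_def by blast
    moreover have "sp q" unfolding sp_def
    proof (intro allI impI)
      fix q' z assume "q = q' @ z \<and> z \<noteq> []"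
      then have "q @ [i] = q' @ (z @ [i]) \<and> z @ [i] \<noteq> []" by simp
      then show "agree q'" using h unfolding sp_def by blast
    qed
    ultimately show "sp q \<and> agree q" by blast
  next
    assume h: "sp q \<and> agree q"
    show "sp (q @ [i])" unfolding sp_def
    proof (intro allI impI)
      fix q' z assume a: "q @ [i] = q' @ z \<and> z \<noteq> []"
      then have "q = q' @ butlast z" by (metis append_butlast_last_id append_assoc butlast_append butlast_snoc)
      then show "agree q'" using h unfolding sp_def by (cases "butlast z = []") auto
    qed
  qed
  have sp0: "sp []" unfolding sp_def by simp
  have lower: "le_bot g a" if "a \<in> A" for a
    unfolding le_bot_def
  proof (intro allI impI)
    fix q assume gq: "g q \<noteq> None"
    then have h: "a0 q \<noteq> None" "sp q" unfolding g_def by (auto split: if_splits)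
    have "a q \<noteq> None"
    proof (cases q rule: rev_cases)
      case Nil then show ?thesis using wf_root wfA that by blast
    next
      case (snoc q0 i)
      then have "agree q0" using h(2) sp_snoc by blast
      then have "a q0 = a0 q0" using that agree_def by blast
      moreover obtain f where "a0 q0 = Some (F f)" "i < ar f" using h(1) snoc wf_child[OF wf0] by blast
      ultimately show ?thesis using snoc wf_child wfA that by metis
    qed
    moreover have "g q = Some Bot \<or> g q = a q" using h that unfolding g_def agree_def by auto
    ultimately show "a q \<noteq> None \<and> (g q = Some Bot \<or> g q = a q)" by blast
  qed
  have wfg: "wf_term ar g"
    unfolding wf_term_def
  proof (intro conjI allI)
    show "g [] \<noteq> None" using sp0 wf_root[OF wf0] unfolding g_def by auto
    fix q i
    show "(g (q @ [i]) \<noteq> None) = (\<exists>f. g q = Some (F f) \<and> i < ar f)"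
    proof
      assume "g (q @ [i]) \<noteq> None"
      then have h: "a0 (q @ [i]) \<noteq> None" "sp q" "agree q" using sp_snoc unfolding g_def by (auto split: if_splits)
      then obtain f where "a0 q = Some (F f)" "i < ar f" using wf_child[OF wf0] by blast
      then show "\<exists>f. g q = Some (F f) \<and> i < ar f" using h unfolding g_def by auto
    next
      assume "\<exists>f. g q = Some (F f) \<and> i < ar f"
      then obtain f where f: "g q = Some (F f)" "i < ar f" by blast
      then have h: "sp q" "agree q" "a0 q = Some (F f)" unfolding g_def by (auto split: if_splits)
      then have "a0 (q @ [i]) \<noteq> None" using f wf_child[OF wf0] by blast
      then show "g (q @ [i]) \<noteq> None" using h sp_snoc unfolding g_def by auto
    qed
  qed
  have greatest: "le_bot h g" if wfh: "wf_term ar h" and hl: "\<forall>a\<in>A. le_bot h a" for h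
    unfolding le_bot_def
  proof (intro allI impI)
    fix q assume hq: "h q \<noteq> None"
    have a0q: "a0 q \<noteq> None" using hq hl a0 unfolding le_bot_def by blast
    have "sp q" unfolding sp_def
    proof (intro allI impI)
      fix q' z assume e: "q = q' @ z \<and> z \<noteq> []"
      then obtain f where f: "h q' = Some (F f)" using wf_prefix[OF wfh, of q' z] hq by auto
      show "agree q'" unfolding agree_def
      proof
        fix a assume "a \<in> A"
        then have "a q' = h q'" "a0 q' = h q'" using hl a0 f unfolding le_bot_def by (metis lab.distinct(3) option.distinct(1) option.inject)+
        then show "a q' = a0 q'" by simp
      qed
    qed
    show "g q \<noteq> None \<and> (h q = Some Bot \<or> h q = g q)"
    proof (cases "h q = Some Bot")
      case True then show ?thesis using a0q \<open>sp q\<close> unfolding g_def by auto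
    next
      case False
      then have "\<forall>a\<in>A. a q = h q" using hl hq unfolding le_bot_def by metis
      then have "agree q" "a0 q = h q" using a0 unfolding agree_def by (metis, metis)
      then show ?thesis using a0q \<open>sp q\<close> unfolding g_def by auto
    qed
  qed
  show ?thesis unfolding is_glb_def using wfg lower greatest by blast
qed



lemma lub_pos:
  assumes li: "is_liminf ar a lam x" and xq: "x q \<noteq> None" "x q \<noteq> Some Bot"
  shows "\<exists>c<lam. \<forall>k. c \<le> k \<and> k < lam \<longrightarrow> a k q = x q"
proof -
  define G where "G = {g. \<exists>b < lam. is_glb ar {a i | i. b \<le> i \<and> i < lam} g}"
  have lub: "is_lub ar G x" using li unfolding is_liminf_def G_def .
  have wfx: "wf_term ar x" using lub is_lub_def by blast
  have "\<exists>g\<in>G. g q = x q"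
  proof (rule ccontr)
    assume nn: "\<not> (\<exists>g\<in>G. g q = x q)"
    have "le_bot g (trunc x q)" if "g \<in> G" for g
      unfolding le_bot_def
    proof (intro allI impI)
      fix p assume gp: "g p \<noteq> None"
      have gx: "le_bot g x" using lub that unfolding is_lub_def by blast
      have wfg: "wf_term ar g" using that unfolding G_def is_glb_def by blast
      show "trunc x q p \<noteq> None \<and> (g p = Some Bot \<or> g p = trunc x q p)"
      proof (cases "\<exists>z. p = q @ z")
        case False then show ?thesis using gx gp unfolding le_bot_def trunc_def by auto
      next
        case True
        then obtain z where z: "p = q @ z" by blast
        show ?thesis
        proof (cases "z = []")
          case True
          then have "g q \<noteq> None" using gp z by simp
          then have "g q = Some Bot" using gx nn that unfolding le_bot_def by blast
          then show ?thesis using True z unfolding trunc_def by simp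
        next
          case False
          then obtain f where "g q = Some (F f)" using wf_prefix[OF wfg, of q z] gp z by auto
          then have "g q = x q" using gx unfolding le_bot_def by force
          then show ?thesis using nn that by blast
        qed
      qed
    qed
    moreover have "wf_term ar (trunc x q)" using wf_trunc[OF wfx xq(1)] .
    ultimately have "le_bot x (trunc x q)" using lub unfolding is_lub_def by blast
    then show False using xq unfolding le_bot_def trunc_def by auto
  qed
  then obtain g b where gb: "b < lam" "is_glb ar {a i | i. b \<le> i \<and> i < lam} g" "g q = x q" unfolding G_def by blast
  have "a k q = x q" if "b \<le> k" "k < lam" for k
  proof -
    have "a k \<in> {a i | i. b \<le> i \<and> i < lam}" using that by blast
    then have "le_bot g (a k)" using gb(2) unfolding is_glb_def by blast
    then show ?thesis using gb(3) xq unfolding le_bot_def by (metis option.distinct(1))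
  qed
  then show ?thesis using gb(1) by blast
qed

lemma lub_lower:
  assumes li: "is_liminf ar a lam x" and c: "c < lam" and wfa: "\<forall>k. c \<le> k \<and> k < lam \<longrightarrow> wf_term ar (a k)"
    and wfh: "wf_term ar h" and hl: "\<forall>k. c \<le> k \<and> k < lam \<longrightarrow> le_bot h (a k)"
  shows "le_bot h x"
proof -
  have in0: "a c \<in> {a i | i. c \<le> i \<and> i < lam}" using c by blast
  have wfs: "\<forall>b\<in>{a i | i. c \<le> i \<and> i < lam}. wf_term ar b" using wfa by blast
  obtain g where g: "is_glb ar {a i | i. c \<le> i \<and> i < lam} g"
    using glb_exists[OF in0 wfs] by blast
  have "\<forall>b\<in>{a i | i. c \<le> i \<and> i < lam}. le_bot h b" using hl by blast
  then have "le_bot h g" using g wfh unfolding is_glb_def by blast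
  moreover have "g \<in> {g. \<exists>b < lam. is_glb ar {a i | i. b \<le> i \<and> i < lam} g}" using g c by blast
  then have "le_bot g x" using li unfolding is_liminf_def is_lub_def by blast
  ultimately show ?thesis by (rule le_bot_trans)
qed

lemma osucc_gt: "(i::'o::wellorder) < a \<Longrightarrow> i < osucc i \<and> osucc i \<le> a"
  unfolding osucc_def by (metis LeastI Least_le)

lemma osucc_least: "(i::'o::wellorder) < k \<Longrightarrow> osucc i \<le> k"
  unfolding osucc_def by (rule Least_le)

lemma no_pred: "\<not> (\<exists>i. i < (b::'o::wellorder)) \<Longrightarrow> b = ord0"
  unfolding ord0_def using Least_le[of "\<lambda>x. True" b] by (metis le_less)

lemma succ_or_limit:
  assumes "\<exists>i. i < (b::'o::wellorder)" "\<not> is_limit b"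
  shows "\<exists>i<b. b = osucc i"
proof -
  obtain i where i: "i < b" "\<forall>k. i < k \<longrightarrow> \<not> k < b" using assms unfolding is_limit_def by blast
  have "osucc i \<le> b" using osucc_least[OF i(1)] .
  moreover have "\<not> osucc i < b" using i(2) osucc_gt[OF i(1)] by blast
  ultimately show ?thesis using i(1) by auto
qed

lemma limit_succ: "is_limit (b::'o::wellorder) \<Longrightarrow> j < b \<Longrightarrow> osucc j < b"
  unfolding is_limit_def by (meson osucc_least le_less_trans)



definition inS :: "pos \<Rightarrow> ('f,'v) pterm \<Rightarrow> pos \<Rightarrow> bool" where
  "inS u l q \<longleftrightarrow> (\<exists>z. u = q @ z) \<or> (\<exists>\<pi> f. q = u @ \<pi> \<and> l \<pi> = Some (F f))"

lemma redex_matches: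
  assumes orth: "orthogonal ar R" and "redex_occ ar R T u"
  shows "\<exists>l r. (l, r) \<in> R \<and> matches T u l"
proof -
  obtain l r \<sigma> where h: "(l, r) \<in> R" "subterm T u = subst \<sigma> l" using assms(2) unfolding redex_occ_def by blast
  have "wf_term ar l" using rule_ft(1)[OF orth h(1)] by (simp add: finite_total_def)
  then show ?thesis using subst_matches h by blast
qed

lemma matches_redex:
  assumes orth: "orthogonal ar R" and wfT: "wf_term ar T" and lr: "(l, r) \<in> R" and m: "matches T u l"
  shows "redex_occ ar R T u"
proof -
  have ftl: "finite_total ar l" and rl: "\<exists>f. l [] = Some (F f)" and ln: "lin l" using rule_ft[OF orth lr] by auto
  have wfl: "wf_term ar l" "\<forall>p. l p \<noteq> Some Bot" using ftl by (auto simp: finite_total_def)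
  obtain f where "l [] = Some (F f)" using rl by blast
  then have "T u \<noteq> None" using m unfolding matches_def by (metis append_Nil2 option.distinct(1))
  then have wf0: "wf_term ar (subterm T u)" using wf_subterm[OF wfT] by blast
  have m0: "matches (subterm T u) [] l" using m unfolding matches_def subterm_def by simp
  have "subterm T u = subst (msub (subterm T u) l) l" using match_subst[OF wf0 wfl ln m0] .
  moreover have "\<forall>v. wf_term ar (msub (subterm T u) l v)" using msub_wf[OF wf0 wfl(1) m0] by blast
  ultimately show ?thesis unfolding redex_occ_def using lr by blast
qed

lemma rstep_info:
  assumes orth: "orthogonal ar R" and "rstep ar R T p lr T'"
  shows "lr \<in> R \<and> matches T p (fst lr) \<and> T p \<noteq> None"
proof -
  obtain \<sigma> where h: "lr \<in> R" "subterm T p = subst \<sigma> (fst lr)" using assms(2) unfolding rstep_def by blast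
  have lr: "(fst lr, snd lr) \<in> R" using h(1) by simp
  have "wf_term ar (fst lr)" using rule_ft(1)[OF orth lr] by (simp add: finite_total_def)
  then have m: "matches T p (fst lr)" using subst_matches h by blast
  obtain f where "fst lr [] = Some (F f)" using rule_ft(3)[OF orth lr] by blast
  then have "T p \<noteq> None" using m unfolding matches_def by (metis append_Nil2 option.distinct(1))
  then show ?thesis using h m by blast
qed

lemma notin_below:
  assumes orth: "orthogonal ar R" and wfT: "wf_term ar T" and lr: "(l, r) \<in> R" and m: "matches T u l"
    and lr2: "lr2 \<in> R" and m2: "matches T p (fst lr2)" and np: "\<not> (\<exists>z. u = p @ z)" and q: "inS u l q"
  shows "\<not> (\<exists>x. q = p @ x)"
proof
  assume "\<exists>x. q = p @ x"
  then obtain x where x: "q = p @ x" by blast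
  show False
  proof (cases "\<exists>z. u = q @ z")
    case True then show False using x np by auto
  next
    case False
    then obtain \<pi> f where \<pi>: "q = u @ \<pi>" "l \<pi> = Some (F f)" using q unfolding inS_def by blast
    have lr2': "(fst lr2, snd lr2) \<in> R" using lr2 by simp
    show False using not_below_fn[OF orth wfT lr lr2' m m2 np \<pi>(2)] x \<pi>(1) by metis
  qed
qed

lemma inS_fn:
  assumes wfT: "wf_term ar T" and m: "matches T u l" and rl: "l [] = Some (F f0)" and q: "inS u l q"
  shows "\<exists>f. T q = Some (F f)"
proof (cases "\<exists>z. u = q @ z")
  case True
  then obtain z where z: "u = q @ z" by blast
  have Tu: "T u = Some (F f0)" using m rl unfolding matches_def by (metis append_Nil2)
  show ?thesis
  proof (cases "z = []")
    case True then show ?thesis using z Tu by simp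
  next
    case False then show ?thesis using wf_prefix[OF wfT, of q z] z Tu by auto
  qed
next
  case False then show ?thesis using q m unfolding inS_def matches_def by blast
qed

lemma inS_pre:
  assumes wfl: "wf_term ar l" and q: "inS u l (q @ [i])"
  shows "inS u l q"
proof (cases "\<exists>z. u = (q @ [i]) @ z")
  case True then show ?thesis unfolding inS_def by (metis append_assoc)
next
  case False
  then obtain \<pi> f where \<pi>: "q @ [i] = u @ \<pi>" "l \<pi> = Some (F f)" using q unfolding inS_def by blast
  show ?thesis
  proof (cases "\<pi> = []")
    case True then show ?thesis using \<pi> unfolding inS_def by auto
  next
    case False
    then have e: "q = u @ butlast \<pi>" "\<pi> = butlast \<pi> @ [last \<pi>]" using \<pi>(1)
      by (metis append_butlast_last_id append_assoc butlast_append butlast_snoc)+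
    then obtain g where "l (butlast \<pi>) = Some (F g)" using wf_prefix[OF wfl, of "butlast \<pi>" "[last \<pi>]"] \<pi>(2) by auto
    then show ?thesis using e unfolding inS_def by blast
  qed
qed

definition hS :: "('f,'v) pterm \<Rightarrow> pos \<Rightarrow> ('f,'v) pterm \<Rightarrow> ('f,'v) pterm" where
  "hS T u l = (\<lambda>q. if inS u l q then T q else if q \<noteq> [] \<and> inS u l (butlast q) \<and> T q \<noteq> None then Some Bot else None)"

lemma wf_hS:
  assumes wfT: "wf_term ar T" and wfl: "wf_term ar l" and m: "matches T u l" and rl: "l [] = Some (F f0)"
  shows "wf_term ar (hS T u l)"
  unfolding wf_term_def
proof (intro conjI allI)
  have "inS u l []" unfolding inS_def by simp
  then show "hS T u l [] \<noteq> None" using inS_fn[OF wfT m rl] unfolding hS_def by auto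
  fix q i
  show "(hS T u l (q @ [i]) \<noteq> None) = (\<exists>f. hS T u l q = Some (F f) \<and> i < ar f)"
  proof
    assume h: "hS T u l (q @ [i]) \<noteq> None"
    have "inS u l q \<and> T (q @ [i]) \<noteq> None"
    proof (cases "inS u l (q @ [i])")
      case True then show ?thesis using inS_pre[OF wfl] inS_fn[OF wfT m rl] by fastforce
    next
      case False then show ?thesis using h unfolding hS_def by (auto split: if_splits)
    qed
    then show "\<exists>f. hS T u l q = Some (F f) \<and> i < ar f" using wf_child[OF wfT] unfolding hS_def by auto
  next
    assume "\<exists>f. hS T u l q = Some (F f) \<and> i < ar f"
    then obtain f where f: "hS T u l q = Some (F f)" "i < ar f" by blast
    then have iq: "inS u l q" unfolding hS_def by (auto split: if_splits)
    then have "T q = Some (F f)" using f unfolding hS_def by simp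
    then have "T (q @ [i]) \<noteq> None" using wf_child[OF wfT] f by blast
    then show "hS T u l (q @ [i]) \<noteq> None" using iq unfolding hS_def by auto
  qed
qed



lemma agree:
  fixes alpha :: "'o::wellorder" and ts :: "'o \<Rightarrow> ('f,'v) pterm"
  assumes orth: "orthogonal ar R"
    and wf: "\<forall>i \<le> alpha. wf_term ar (ts i)"
    and st: "\<forall>i < alpha. rstep ar R (ts i) (ps i) (rs i) (ts (osucc i))"
    and lim: "\<forall>lam \<le> alpha. is_limit lam \<longrightarrow> is_liminf ar (ctx ts ps) lam (ts lam)"
    and b: "b \<le> alpha" and cb: "c \<le> b"
    and lr: "(l, r) \<in> R" and mc: "matches (ts c) u l"
    and np: "\<forall>k. c \<le> k \<and> k < b \<longrightarrow> \<not> (\<exists>z. u = ps k @ z)"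
  shows "c \<le> j \<Longrightarrow> j \<le> b \<Longrightarrow> \<forall>q. inS u l q \<longrightarrow> ts j q = ts c q"
proof (induction j rule: less_induct)
  case (less j)
  have wfl: "wf_term ar l" using rule_ft(1)[OF orth lr] by (simp add: finite_total_def)
  obtain f0 where rl: "l [] = Some (F f0)" using rule_ft(3)[OF orth lr] by blast
  have wfc: "wf_term ar (ts c)" using wf cb b by auto
  have mk_of: "matches (ts k) u l" if "\<forall>q. inS u l q \<longrightarrow> ts k q = ts c q" for k
    unfolding matches_def
  proof (intro allI impI)
    fix \<pi> f assume "l \<pi> = Some (F f)"
    moreover then have "inS u l (u @ \<pi>)" unfolding inS_def by blast
    ultimately show "ts k (u @ \<pi>) = Some (F f)" using that mc unfolding matches_def by auto
  qed
  show ?case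
  proof (cases "j = c")
    case True then show ?thesis by simp
  next
    case False
    then have cj: "c < j" using less.prems by simp
    then have ex: "\<exists>i. i < j" by blast
    show ?thesis
    proof (cases "is_limit j")
      case False
      then obtain k where k: "k < j" "j = osucc k" using succ_or_limit ex by blast
      have ck: "c \<le> k"
      proof (rule ccontr)
        assume "\<not> c \<le> k"
        then have "k < c" by simp
        then have "osucc k \<le> c" by (rule osucc_least)
        then show False using cj k by simp
      qed
      have IH: "\<forall>q. inS u l q \<longrightarrow> ts k q = ts c q" using less.IH[OF k(1) ck] k less.prems by simp
      have ka: "k < alpha" using k less.prems b by simp
      have wfk: "wf_term ar (ts k)" using wf ka by simp
      have mk: "matches (ts k) u l" using mk_of IH by blast
      have stk: "rstep ar R (ts k) (ps k) (rs k) (ts j)" using st ka k by simp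
      then obtain \<sigma> where tj: "ts j = repl (ts k) (ps k) (subst \<sigma> (snd (rs k)))" unfolding rstep_def by blast
      have ri: "rs k \<in> R" "matches (ts k) (ps k) (fst (rs k))" using rstep_info[OF orth stk] by auto
      have npk: "\<not> (\<exists>z. u = ps k @ z)" using np ck k less.prems by auto
      show ?thesis
      proof (intro allI impI)
        fix q assume q: "inS u l q"
        have "\<not> (\<exists>x. q = ps k @ x)" using notin_below[OF orth wfk lr mk ri npk q] .
        then have "ts j q = ts k q" unfolding tj repl_def by simp
        then show "ts j q = ts c q" using IH q by simp
      qed
    next
      case True
      have li: "is_liminf ar (ctx ts ps) j (ts j)" using lim True less.prems b by auto
      have hk: "le_bot (hS (ts c) u l) (ctx ts ps k) \<and> wf_term ar (ctx ts ps k)" if kk: "c \<le> k" "k < j" for k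
      proof -
        have IH: "\<forall>q. inS u l q \<longrightarrow> ts k q = ts c q" using less.IH[OF kk(2) kk(1)] kk less.prems by simp
        have ka: "k < alpha" using kk less.prems b by simp
        have wfk: "wf_term ar (ts k)" using wf ka by simp
        have mk: "matches (ts k) u l" using mk_of IH by blast
        have stk: "rstep ar R (ts k) (ps k) (rs k) (ts (osucc k))" using st ka by simp
        have ri: "rs k \<in> R" "matches (ts k) (ps k) (fst (rs k))" "ts k (ps k) \<noteq> None"
          using rstep_info[OF orth stk] by auto
        have npk: "\<not> (\<exists>z. u = ps k @ z)" using np kk less.prems by auto
        have nb: "\<not> (\<exists>x. q = ps k @ x)" if "inS u l q" for q using notin_below[OF orth wfk lr mk ri(1,2) npk that] .
        have "le_bot (hS (ts c) u l) (trunc (ts k) (ps k))"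
          unfolding le_bot_def
        proof (intro allI impI)
          fix q assume hq: "hS (ts c) u l q \<noteq> None"
          show "trunc (ts k) (ps k) q \<noteq> None \<and> (hS (ts c) u l q = Some Bot \<or> hS (ts c) u l q = trunc (ts k) (ps k) q)"
          proof (cases "inS u l q")
            case True
            then have "trunc (ts k) (ps k) q = ts c q" using nb IH unfolding trunc_def by simp
            then show ?thesis using True hq unfolding hS_def by simp
          next
            case False
            then have h: "q \<noteq> []" "inS u l (butlast q)" "ts c q \<noteq> None" "hS (ts c) u l q = Some Bot"
              using hq unfolding hS_def by (auto split: if_splits)
            have qe: "q = butlast q @ [last q]" using h(1) by simp
            have "trunc (ts k) (ps k) q \<noteq> None"
            proof (cases "\<exists>z. q = ps k @ z")
              case True
              then obtain z where z: "q = ps k @ z" by blast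
              show ?thesis
              proof (cases "z = []")
                case True then show ?thesis using z unfolding trunc_def by simp
              next
                case False
                then have "butlast q = ps k @ butlast z" using z by (simp add: butlast_append)
                then show ?thesis using nb[OF h(2)] by blast
              qed
            next
              case False
              obtain f where "ts c (butlast q) = Some (F f)" using inS_fn[OF wfc mc rl h(2)] by blast
              moreover have "ts k (butlast q) = ts c (butlast q)" using IH h(2) by simp
              ultimately have "ts k q \<noteq> None" using h(3) qe wf_child[OF wfc] wf_child[OF wfk] by (metis option.inject lab.inject(1))
              then show ?thesis using False unfolding trunc_def by simp
            qed
            then show ?thesis using h(4) by simp
          qed
        qed
        moreover have "wf_term ar (trunc (ts k) (ps k))" using wf_trunc[OF wfk ri(3)] .
        ultimately show ?thesis unfolding ctx_trunc by simp
      qed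
      have wfh: "wf_term ar (hS (ts c) u l)" using wf_hS[OF wfc wfl mc rl] .
      have "le_bot (hS (ts c) u l) (ts j)" using lub_lower[OF li cj _ wfh] hk by blast
      show ?thesis
      proof (intro allI impI)
        fix q assume q: "inS u l q"
        obtain f where f: "ts c q = Some (F f)" using inS_fn[OF wfc mc rl q] by blast
        then have "hS (ts c) u l q = Some (F f)" using q unfolding hS_def by simp
        then show "ts j q = ts c q" using \<open>le_bot (hS (ts c) u l) (ts j)\<close> f unfolding le_bot_def
          by (metis lab.distinct(3) option.distinct(1) option.inject)
      qed
    qed
  qed
qed



theorem proposition5p10:
  fixes ar :: "'f \<Rightarrow> nat"
    and R :: "(('f, 'v) pterm \<times> ('f, 'v) pterm) set"
    and alpha :: "'o::wellorder"
    and ts :: "'o \<Rightarrow> ('f, 'v) pterm"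
    and ps :: "'o \<Rightarrow> pos"
    and rs :: "'o \<Rightarrow> ('f, 'v) pterm \<times> ('f, 'v) pterm"
    and s t :: "('f, 'v) pterm"
    and U :: "pos set"
    and D :: "'o \<Rightarrow> pos set"
  assumes "orthogonal ar R"
    and "strongly_p_converges ar R alpha ts ps rs t"
    and "s = ts ord0"
    and "\<forall>u \<in> U. redex_occ ar R s u"
    and "descendant_family alpha ts ps rs U D"
  shows "\<forall>u \<in> D alpha. redex_occ ar R t u"
proof -
  note orth = assms(1)
  have wf: "\<forall>i \<le> alpha. wf_term ar (ts i)"
    and st: "\<forall>i < alpha. rstep ar R (ts i) (ps i) (rs i) (ts (osucc i))"
    and lim0: "\<forall>lam < alpha. is_limit lam \<longrightarrow> is_liminf ar (ctx ts ps) lam (ts lam)"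
    and tt: "t = ts alpha"
    and lima: "is_limit alpha \<longrightarrow> is_liminf ar (ctx ts ps) alpha t"
    using assms(2) unfolding strongly_p_converges_def by auto
  have lim: "\<forall>lam \<le> alpha. is_limit lam \<longrightarrow> is_liminf ar (ctx ts ps) lam (ts lam)"
    using lim0 lima tt le_less by auto
  have d0: "\<forall>b \<le> alpha. \<not> (\<exists>i. i < b) \<longrightarrow> D b = U"
    and d1: "\<forall>i < alpha. D (osucc i) = desc_step (rs i) (ps i) (D i)"
    and d2: "\<forall>b \<le> alpha. is_limit b \<longrightarrow>
        D b = {u. ts b u \<noteq> None \<and> ts b u \<noteq> Some Bot \<and>
                  (\<exists>c < b. \<forall>i. c \<le> i \<and> i < b \<longrightarrow> u \<in> D i)}"
    using assms(5) unfolding descendant_family_def by auto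
  have main: "b \<le> alpha \<Longrightarrow> \<forall>u\<in>D b. redex_occ ar R (ts b) u" for b
  proof (induction b rule: less_induct)
    case (less b)
    have wfb: "wf_term ar (ts b)" using wf less.prems by simp
    show ?case
    proof (cases "\<exists>i. i < b")
      case False
      then have "b = ord0" "D b = U" using no_pred d0 less.prems by auto
      then show ?thesis using assms(3,4) by simp
    next
      case True
      show ?thesis
      proof (cases "is_limit b")
        case False
        then obtain i where i: "i < b" "b = osucc i" using succ_or_limit True by blast
        have ia: "i < alpha" using i less.prems by simp
        have IH: "\<forall>u\<in>D i. redex_occ ar R (ts i) u" using less.IH i ia by simp
        have Db: "D b = desc_step (rs i) (ps i) (D i)" using d1 ia i by simp
        have wfi: "wf_term ar (ts i)" using wf ia by simp
        have stk: "rstep ar R (ts i) (ps i) (rs i) (ts b)" using st ia i by simp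
        then obtain \<sigma> where sg: "subterm (ts i) (ps i) = subst \<sigma> (fst (rs i))"
            "ts b = repl (ts i) (ps i) (subst \<sigma> (snd (rs i)))" unfolding rstep_def by blast
        have ri: "rs i \<in> R" "matches (ts i) (ps i) (fst (rs i))" using rstep_info[OF orth stk] by auto
        obtain l2 r2 where rsi: "rs i = (l2, r2)" by (cases "rs i")
        have r2R: "(l2, r2) \<in> R" using ri rsi by simp
        have wfl2: "wf_term ar l2" and wfr2: "wf_term ar r2"
          using rule_ft(1,2)[OF orth r2R] by (auto simp: finite_total_def)
        have m2: "matches (ts i) (ps i) l2" using ri rsi by simp
        show ?thesis
        proof
          fix u assume "u \<in> D b"
          then obtain u0 where u0: "u0 \<in> D i" "u \<in> desc1 (rs i) (ps i) u0" using Db unfolding desc_step_def by blast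
          obtain l1 r1 where l1: "(l1, r1) \<in> R" "matches (ts i) u0 l1" using redex_matches[OF orth] IH u0 by blast
          show "redex_occ ar R (ts b) u"
          proof (cases "\<exists>x. u0 = ps i @ x")
            case False
            then have uu: "u = u0" using u0(2) unfolding desc1_def by simp
            have "matches (ts b) u0 l1" unfolding matches_def
            proof (intro allI impI)
              fix \<pi> f assume fp: "l1 \<pi> = Some (F f)"
              have "\<not> (\<exists>x. u0 @ \<pi> = ps i @ x)" using not_below_fn[OF orth wfi l1(1) r2R l1(2) m2 False fp] .
              then show "ts b (u0 @ \<pi>) = Some (F f)" using sg(2) l1(2) fp unfolding repl_def matches_def by simp
            qed
            then show ?thesis using matches_redex[OF orth wfb l1(1)] uu by simp
          next
            case True
            then have "u \<in> {ps i @ w' @ x | w w' x v. u0 = ps i @ w @ x \<and> l2 w = Some (V v) \<and> r2 w' = Some (V v)}"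
              using u0(2) rsi unfolding desc1_def by (auto split: if_splits)
            then obtain w w' x v where wx: "u = ps i @ w' @ x" "u0 = ps i @ w @ x" "l2 w = Some (V v)" "r2 w' = Some (V v)" by blast
            have "subterm (ts b) u = subterm (ts i) u0"
            proof
              fix z
              have "ts b (ps i @ w' @ x @ z) = subst \<sigma> r2 (w' @ x @ z)" using sg(2) rsi unfolding repl_def by simp
              also have "\<dots> = \<sigma> v (x @ z)" using subst_var[OF wfr2 wx(4)] by simp
              also have "\<dots> = subst \<sigma> l2 (w @ x @ z)" using subst_var[OF wfl2 wx(3)] by simp
              also have "\<dots> = ts i (ps i @ w @ x @ z)" using fun_cong[OF sg(1), of "w @ x @ z"] rsi unfolding subterm_def by simp
              finally show "subterm (ts b) u z = subterm (ts i) u0 z" using wx unfolding subterm_def by simp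
            qed
            moreover have "redex_occ ar R (ts i) u0" using IH u0 by blast
            ultimately show ?thesis unfolding redex_occ_def by simp
          qed
        qed
      next
        case True
        show ?thesis
        proof
          fix u assume uD: "u \<in> D b"
          then have h: "ts b u \<noteq> None" "ts b u \<noteq> Some Bot" "\<exists>c<b. \<forall>i. c \<le> i \<and> i < b \<longrightarrow> u \<in> D i"
            using d2 less.prems True by auto
          obtain c0 where c0: "c0 < b" "\<forall>i. c0 \<le> i \<and> i < b \<longrightarrow> u \<in> D i" using h(3) by blast
          have li: "is_liminf ar (ctx ts ps) b (ts b)" using lim True less.prems by auto
          obtain c1 where c1: "c1 < b" "\<forall>k. c1 \<le> k \<and> k < b \<longrightarrow> ctx ts ps k u = ts b u"
            using lub_pos[OF li h(1,2)] by blast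
          define c where "c = max c0 c1"
          have cb: "c < b" using c0 c1 by (simp add: c_def)
          have uc: "u \<in> D c" using c0 cb by (simp add: c_def)
          have "redex_occ ar R (ts c) u" using less.IH[OF cb] cb less.prems uc by simp
          then obtain l r where lr: "(l, r) \<in> R" "matches (ts c) u l" using redex_matches[OF orth] by blast
          have np: "\<forall>k. c \<le> k \<and> k < b \<longrightarrow> \<not> (\<exists>z. u = ps k @ z)"
          proof (intro allI impI notI)
            fix k assume k: "c \<le> k \<and> k < b" and ex: "\<exists>z. u = ps k @ z"
            then have "ctx ts ps k u = ts b u" using c1 by (simp add: c_def)
            moreover have "ctx ts ps k u = None \<or> ctx ts ps k u = Some Bot" using ex unfolding ctx_trunc trunc_def by auto
            ultimately show False using h by auto
          qed
          have ag: "\<forall>q. inS u l q \<longrightarrow> ts b q = ts c q"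
            using agree[OF orth wf st lim less.prems less_imp_le[OF cb] lr(1,2) np less_imp_le[OF cb] order_refl] .
          have "matches (ts b) u l" unfolding matches_def
          proof (intro allI impI)
            fix \<pi> f assume "l \<pi> = Some (F f)"
            moreover then have "inS u l (u @ \<pi>)" unfolding inS_def by blast
            ultimately show "ts b (u @ \<pi>) = Some (F f)" using ag lr(2) unfolding matches_def by auto
          qed
          then show "redex_occ ar R (ts b) u" using matches_redex[OF orth wfb lr(1)] by simp
        qed
      qed
    qed
  qed
  show ?thesis using main[of alpha] tt by simp
qed

end
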